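(* Let $k\ge 1$ be an integer with $4\nmid k$ such that $\mathcal{D}:=(k^2+4)/\gcd(2,k)^2$ is squarefree, and let $p$ be a prime. Then the polynomial $\mathcal{F}_p(x):=x^{2p}-kx^p-1$ is irreducible over $\mathbb{Q}$. *)

theory Defs
  imports "HOL-Computational_Algebra.Computational_Algebra"
begin

definition F_poly :: "int \<Rightarrow> nat \<Rightarrow> rat poly" where
  "F_poly k p = monom 1 (2 * p) - smult (of_int k) (monom 1 p) - 1"

end

theory Submission
  imports Defs "HOL-Computational_Algebra.Computational_Algebra" "HOL-Computational_Algebra.Field_as_Ring"
begin
definition subfld :: "complex set \<Rightarrow> bool" where
  "subfld S \<longleftrightarrow> 0 \<in> S \<and> 1 \<in> S \<and> (\<forall>x\<in>S. \<forall>y\<in>S. x + y \<in> S \<and> x * y \<in> S) \<and>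
     (\<forall>x\<in>S. - x \<in> S \<and> inverse x \<in> S)"

definition cin :: "complex set \<Rightarrow> complex poly \<Rightarrow> bool" where
  "cin S f \<longleftrightarrow> (\<forall>i. coeff f i \<in> S)"

lemma subfld_sum: "subfld S \<Longrightarrow> (\<And>i. i \<in> A \<Longrightarrow> f i \<in> S) \<Longrightarrow> sum f A \<in> S"
  by (induction A rule: infinite_finite_induct) (auto simp: subfld_def)

lemma cin_add: "subfld S \<Longrightarrow> cin S f \<Longrightarrow> cin S g \<Longrightarrow> cin S (f + g)"
  by (auto simp: cin_def subfld_def)

lemma cin_uminus: "subfld S \<Longrightarrow> cin S f \<Longrightarrow> cin S (- f)"
  by (auto simp: cin_def subfld_def)

lemma cin_diff: "subfld S \<Longrightarrow> cin S f \<Longrightarrow> cin S g \<Longrightarrow> cin S (f - g)"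
  using cin_add[of S f "-g"] cin_uminus[of S g] by simp

lemma cin_mult: "subfld S \<Longrightarrow> cin S f \<Longrightarrow> cin S g \<Longrightarrow> cin S (f * g)"
  unfolding cin_def coeff_mult
  by (intro allI subfld_sum) (auto simp: subfld_def)

lemma cin_const: "subfld S \<Longrightarrow> c \<in> S \<Longrightarrow> cin S [:c:]"
  by (auto simp: cin_def coeff_pCons split: nat.splits simp: subfld_def)

lemma cin_monom: "subfld S \<Longrightarrow> c \<in> S \<Longrightarrow> cin S (monom c n)"
  by (auto simp: cin_def coeff_monom subfld_def)

lemma cin_smult: "subfld S \<Longrightarrow> c \<in> S \<Longrightarrow> cin S f \<Longrightarrow> cin S (smult c f)"
  by (auto simp: cin_def subfld_def)

lemma subfld_div: "subfld S \<Longrightarrow> x \<in> S \<Longrightarrow> y \<in> S \<Longrightarrow> x / y \<in> S"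
  by (auto simp: subfld_def divide_inverse)

lemma cin_divmod_ex:
  assumes S: "subfld S" and b: "cin S b" "b \<noteq> 0"
  shows "cin S a \<Longrightarrow> \<exists>q r. cin S q \<and> cin S r \<and> a = q * b + r \<and> (r = 0 \<or> degree r < degree b)"
proof (induction "degree a" arbitrary: a rule: less_induct)
  case less
  show ?case
  proof (cases "a = 0 \<or> degree a < degree b")
    case True
      have "cin S 0 \<and> cin S a \<and> a = 0 * b + a \<and> (a = 0 \<or> degree a < degree b)"
        using True less.prems S by (auto simp: cin_def subfld_def)
    then show ?thesis by blast
  next
    case False
    then have a0: "a \<noteq> 0" and dab: "degree b \<le> degree a" by auto
    define c where "c = lead_coeff a / lead_coeff b"
    define m where "m = monom c (degree a - degree b)"
    define a' where "a' = a - m * b"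
    have cS: "c \<in> S" unfolding c_def
      by (rule subfld_div[OF S]) (use less.prems b in \<open>auto simp: cin_def\<close>)
    have cm: "cin S m" unfolding m_def by (rule cin_monom[OF S cS])
    have ca': "cin S a'" unfolding a'_def by (intro cin_diff cin_mult S less.prems cm b)
    have dm: "degree (m * b) \<le> degree a"
      unfolding m_def using degree_mult_le[of "monom c (degree a - degree b)" b] degree_monom_le[of c "degree a - degree b"] dab
      by linarith
    have da': "degree a' \<le> degree a" unfolding a'_def
      using degree_diff_le[OF order.refl dm] by simp
    have "coeff (m * b) (degree a) = c * lead_coeff b" unfolding m_def
      using dab by (simp add: coeff_monom_mult)
    also have "\<dots> = lead_coeff a" unfolding c_def using b by simp
    finally have "coeff a' (degree a) = 0" unfolding a'_def by simp
    then have lt: "a' = 0 \<or> degree a' < degree a"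
      using da' a0 by (metis le_neq_implies_less leading_coeff_0_iff)
    show ?thesis
    proof (cases "a' = 0")
      case True
      have "cin S m \<and> cin S 0 \<and> a = m * b + 0 \<and> (0 = (0::complex poly) \<or> degree (0::complex poly) < degree b)"
        using True cm S by (auto simp: cin_def subfld_def a'_def)
      then show ?thesis by blast
    next
      case False
      with lt have "degree a' < degree a" by simp
      from less.hyps[OF this ca'] obtain q r where qr: "cin S q" "cin S r" "a' = q * b + r" "r = 0 \<or> degree r < degree b"
        by blast
      have "cin S (q + m) \<and> cin S r \<and> a = (q + m) * b + r \<and> (r = 0 \<or> degree r < degree b)"
        using qr cm cin_add[OF S] by (auto simp: a'_def algebra_simps)
      then show ?thesis by blast
    qed
  qed
qed

lemma cin_divmod:
  assumes S: "subfld S" and b: "cin S b" and a: "cin S a"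
  shows "cin S (a div b) \<and> cin S (a mod b)"
proof (cases "b = 0")
  case True
  then show ?thesis using a S by (auto simp: cin_def subfld_def)
next
  case False
  from cin_divmod_ex[OF S b False a] obtain q r where qr: "cin S q" "cin S r" "a = q * b + r" "r = 0 \<or> degree r < degree b"
    by blast
  have "(a div b, a mod b) = (q, r)"
  proof (rule euclidean_relation_polyI)
    show "b dvd a \<Longrightarrow> r = 0 \<and> a = q * b"
    proof -
      assume "b dvd a"
      then have "b dvd r" using qr(3) by (metis dvd_add_right_iff dvd_triv_right)
      then have "r = 0" using qr(4) False by (metis dvd_imp_degree_le not_le)
      then show ?thesis using qr by simp
    qed
  qed (use qr False in auto)
  then show ?thesis using qr by simp
qed

lemma cin_gcd:
  assumes S: "subfld S"
  shows "cin S a \<Longrightarrow> cin S b \<Longrightarrow> cin S (gcd a b)"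
proof (induction "if b = 0 then 0 else Suc (degree b)" arbitrary: a b rule: less_induct)
  case less
  show ?case
  proof (cases "b = 0")
    case True
    have "normalize a = a div [:unit_factor (lead_coeff a):]" by (simp add: normalize_poly_def)
    moreover have "cin S [:unit_factor (lead_coeff a):]"
      using less.prems S by (intro cin_const) (auto simp: cin_def)
    ultimately show ?thesis using True cin_divmod[OF S _ less.prems(1)] by simp
  next
    case False
    have "gcd a b = gcd b (a mod b)" using False by (simp add: gcd.commute)
    moreover have "cin S (a mod b)" using cin_divmod[OF S less.prems(2,1)] by simp
    moreover have "(if a mod b = 0 then 0 else Suc (degree (a mod b))) < (if b = 0 then 0 else Suc (degree b))"
      using False degree_mod_less[of b a] by auto
    ultimately show ?thesis using less.hyps[of "a mod b" b] less.prems by metis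
  qed
qed

lemma monic_dvd_root_mod:
  fixes c :: complex and b :: real
  assumes f: "q dvd (monom 1 n - [:c:])" and lc: "lead_coeff q = 1"
    and cb: "cmod c = b ^ n" and b: "b > 0" and n: "n > 0"
  shows "cmod (poly q 0) = b ^ degree q"
  using f lc
proof (induction "degree q" arbitrary: q)
  case 0
  then have "q = [:1:]" by (metis degree_0_id)
  then show ?case using 0 by simp
next
  case (Suc d)
  then have "\<not> constant (poly q)" by (simp add: constant_degree)
  then obtain z where z: "poly q z = 0" using fundamental_theorem_of_algebra by blast
  then have "[:-z, 1:] dvd q" by (simp add: poly_eq_0_iff_dvd)
  then obtain q' where q': "q = [:-z, 1:] * q'" by (elim dvdE)
  have q'0: "q' \<noteq> 0" using q' Suc.prems by auto
  have "degree q = 1 + degree q'" unfolding q' using q'0 by (subst degree_mult_eq) auto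
  then have dq': "degree q' = d" using Suc.hyps(2) by simp
  have "lead_coeff q = lead_coeff [:-z, 1:] * lead_coeff q'" unfolding q' by (rule lead_coeff_mult)
  then have lq': "lead_coeff q' = 1" using Suc.prems(2) by simp
  have "q' dvd (monom 1 n - [:c:])" using Suc.prems(1) q' by (metis dvd_mult_right)
  then have IH: "cmod (poly q' 0) = b ^ d" using Suc.hyps(1)[OF dq'[symmetric]] lq' dq' by simp
  have "poly (monom 1 n - [:c:]) z = 0" using Suc.prems(1) z by (metis dvdE mult_eq_0_iff poly_mult)
  then have "z ^ n = c" by (simp add: poly_monom)
  then have "cmod z ^ n = b ^ n" using cb by (metis norm_power)
  then have "cmod z = b" using b n by (meson norm_ge_zero less_imp_le power_eq_imp_eq_base)
  have "poly q 0 = (- z) * poly q' 0" unfolding q' by simp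
  then have "cmod (poly q 0) = b * b ^ d" using IH \<open>cmod z = b\<close> by (simp add: norm_mult)
  then show ?case using Suc.hyps(2)[symmetric] by simp
qed

lemma sq_int:
  fixes D :: int and B :: rat
  assumes sf: "squarefree D" and BZ: "B^2 * of_int D \<in> \<int>"
  shows "B \<in> \<int>"
proof -
  obtain m n where qn: "quotient_of B = (m, n)" by (cases "quotient_of B") auto
  have B: "B = of_int m / of_int n" using quotient_of_div[OF qn] .
  have n0: "n > 0" using quotient_of_denom_pos[OF qn] .
  have cop: "coprime m n" using quotient_of_coprime[OF qn] .
  from BZ obtain N where N: "B^2 * of_int D = of_int N" by (elim Ints_cases)
  have "of_int (m^2 * D) = (of_int (N * n^2) :: rat)"
    using N n0 unfolding B by (simp add: field_simps power2_eq_square)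
  then have eq: "m^2 * D = N * n^2" by (simp only: of_int_eq_iff)
  have "n^2 dvd m^2 * D" unfolding eq by simp
  moreover have "coprime (n^2) (m^2)" using cop by (simp add: coprime_commute)
  ultimately have "n^2 dvd D" by (simp add: coprime_dvd_mult_right_iff)
  then have "is_unit n" using sf by (simp add: squarefree_def)
  then have "n = 1" using n0 by auto
  then show ?thesis unfolding B by simp
qed

lemma sqrt_irrat:
  fixes D :: int
  assumes sf: "squarefree D" and D1: "D > 1"
  shows "sqrt (of_int D) \<noteq> of_rat r"
proof
  assume h: "sqrt (of_int D) = of_rat r"
  then have "of_rat (r^2) = (of_int D :: real)" using D1
    by (metis of_int_0_less_iff of_rat_power order_less_imp_le real_sqrt_pow2 zero_less_one
          dual_order.strict_trans of_int_0_le_iff)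
  then have r2: "r^2 = of_int D" by (metis of_rat_eq_iff of_rat_of_int_eq)
  have "r \<in> \<int>" by (rule sq_int[of 1]) (use r2 in auto)
  then obtain z where z: "r = of_int z" by (elim Ints_cases)
  have zD: "z^2 = D" using r2 unfolding z by (metis of_int_eq_iff of_int_power)
  then have "is_unit z" using sf by (simp add: squarefree_def)
  then have "\<bar>z\<bar> = 1" by (simp add: zdvd1_eq)
  then have "z^2 = 1" by (metis power_one power2_abs)
  then show False using zD D1 by simp
qed

definition Kr :: "int \<Rightarrow> real set" where
  "Kr D = {x. \<exists>u v. x = of_rat u + of_rat v * sqrt (of_int D)}"

lemma Kr_unique:
  assumes sf: "squarefree D" and D1: "D > 1"
    and eq: "of_rat u + of_rat v * sqrt (of_int D) = of_rat u' + of_rat v' * sqrt (of_int D)"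
  shows "u = u' \<and> v = v'"
proof (cases "v = v'")
  case True
  then show ?thesis using eq by simp
next
  case False
  then have "sqrt (of_int D) = of_rat ((u - u') / (v' - v))"
    using eq by (simp add: of_rat_divide of_rat_diff field_simps)
  then show ?thesis using sqrt_irrat[OF sf D1] by blast
qed

lemma Kr_ops:
  assumes D0: "D \<ge> 0"
  shows "of_rat r \<in> Kr D" "x \<in> Kr D \<Longrightarrow> y \<in> Kr D \<Longrightarrow> x + y \<in> Kr D"
    "x \<in> Kr D \<Longrightarrow> y \<in> Kr D \<Longrightarrow> x * y \<in> Kr D" "x \<in> Kr D \<Longrightarrow> - x \<in> Kr D"
    "sqrt (of_int D) \<in> Kr D"
proof -
  let ?s = "sqrt (of_int D) :: real"
  have ss: "?s * ?s = of_int D" using D0 by simp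
  show "of_rat r \<in> Kr D" unfolding Kr_def by (rule CollectI, rule exI[of _ r], rule exI[of _ 0]) simp
  show "?s \<in> Kr D" unfolding Kr_def by (rule CollectI, rule exI[of _ 0], rule exI[of _ 1]) simp
  assume x: "x \<in> Kr D"
  then obtain u v where uv: "x = of_rat u + of_rat v * ?s" unfolding Kr_def by blast
  show "- x \<in> Kr D" unfolding Kr_def uv
    by (rule CollectI, rule exI[of _ "-u"], rule exI[of _ "-v"]) (simp add: of_rat_minus)
  assume y: "y \<in> Kr D"
  then obtain u' v' where uv': "y = of_rat u' + of_rat v' * ?s" unfolding Kr_def by blast
  show "x + y \<in> Kr D" unfolding Kr_def uv uv'
    by (rule CollectI, rule exI[of _ "u + u'"], rule exI[of _ "v + v'"]) (simp add: of_rat_add algebra_simps)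
  have "x * y = of_rat (u * u' + v * v' * of_int D) + of_rat (u * v' + v * u') * ?s"
    unfolding uv uv' using D0 by (simp add: of_rat_add of_rat_mult algebra_simps ss)
  then show "x * y \<in> Kr D" unfolding Kr_def by blast
qed

lemma Kr_inverse:
  assumes sf: "squarefree D" and D1: "D > 1" and x: "x \<in> Kr D"
  shows "inverse x \<in> Kr D"
proof -
  let ?s = "sqrt (of_int D) :: real"
  have ss: "?s * ?s = of_int D" using D1 by simp
  obtain u v where uv: "x = of_rat u + of_rat v * ?s" using x unfolding Kr_def by blast
  show ?thesis
  proof (cases "x = 0")
    case True
    then show ?thesis using Kr_ops(1)[of D 0] D1 by simp
  next
    case False
    define N where "N = u * u - v * v * of_int D"
    have N0: "N \<noteq> 0"
    proof
      assume N: "N = 0"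
      show False
      proof (cases "v = 0")
        case True
        then have "u = 0" using N unfolding N_def by simp
        then show False using False True uv by simp
      next
        case v0: False
        have "u * u = v * v * of_int D" using N unfolding N_def by simp
        then have "(u/v)^2 = of_int D" using v0 by (simp add: field_simps power2_eq_square)
        then have "of_rat ((u/v)^2) = (of_int D :: real)" by simp
        then have "(of_rat (u/v))^2 = (of_int D :: real)" by (simp add: of_rat_power)
        then have "sqrt (of_int D) = \<bar>of_rat (u/v)\<bar>" by (metis real_sqrt_abs)
        then have "sqrt (of_int D) = of_rat (u/v) \<or> sqrt (of_int D) = of_rat (-(u/v))"
          by (auto simp: abs_if of_rat_minus)
        then show False using sqrt_irrat[OF sf D1] by blast
      qed
    qed
    have Nr: "(of_rat N :: real) = of_rat u * of_rat u - of_rat v * of_rat v * of_int D"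
      unfolding N_def by (simp add: of_rat_diff of_rat_mult)
    have "x * (of_rat u - of_rat v * ?s) = of_rat u * of_rat u - of_rat v * of_rat v * (?s * ?s)"
      unfolding uv by (simp add: algebra_simps)
    also have "\<dots> = of_rat N" unfolding Nr ss ..
    finally have xN: "x * (of_rat u - of_rat v * ?s) = of_rat N" .
    have "x * ((of_rat u - of_rat v * ?s) / of_rat N) = 1" using N0 xN by simp
    then have "inverse x = (of_rat u - of_rat v * ?s) / of_rat N"
      by (metis inverse_unique)
    also have "\<dots> = of_rat (u / N) + of_rat (- v / N) * ?s"
      by (simp add: of_rat_divide of_rat_minus diff_divide_distrib)
    finally show ?thesis unfolding Kr_def by blast
  qed
qed

definition Kc :: "int \<Rightarrow> complex set" where
  "Kc D = of_real ` Kr D"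

lemma subfld_Kc:
  assumes sf: "squarefree D" and D1: "D > 1"
  shows "subfld (Kc D)"
proof -
  have D0: "D \<ge> 0" using D1 by simp
  have "0 \<in> Kr D" using Kr_ops(1)[OF D0, of 0] by simp
  moreover have "1 \<in> Kr D" using Kr_ops(1)[OF D0, of 1] by simp
  ultimately show ?thesis
    unfolding subfld_def Kc_def
    using Kr_ops[OF D0] Kr_inverse[OF sf D1]
    by (auto simp flip: of_real_add of_real_mult of_real_minus of_real_inverse intro!: imageI)
qed

fun wseq :: "int \<Rightarrow> int \<Rightarrow> nat \<Rightarrow> int" where
  "wseq m d 0 = 2"
| "wseq m d (Suc 0) = m"
| "wseq m d (Suc (Suc n)) = m * wseq m d (Suc n) + d^2 * wseq m d n"

lemma wseq_aux:
  fixes dd :: real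
  assumes "dd \<noteq> 0"
  shows "dd ^ Suc (Suc n) * ((M / dd) * X + Y) = M * (dd ^ Suc n * X) + dd^2 * (dd ^ n * Y)"
proof -
  have e1: "dd ^ Suc (Suc n) * (M / dd) = M * dd ^ Suc n" using assms by simp
  have e2: "dd ^ Suc (Suc n) = dd^2 * dd ^ n" by (simp add: power2_eq_square)
  have "dd ^ Suc (Suc n) * ((M / dd) * X + Y) = (dd ^ Suc (Suc n) * (M / dd)) * X + dd ^ Suc (Suc n) * Y"
    by (simp add: algebra_simps)
  also have "\<dots> = M * dd ^ Suc n * X + dd^2 * dd ^ n * Y" unfolding e1 unfolding e2 ..
  finally show ?thesis by (simp add: algebra_simps)
qed

lemma wseq_real:
  fixes a a' :: real
  assumes aa: "a * a' = -1" and T: "a + a' = of_int m / of_int d" and d: "d \<noteq> 0"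
  shows "of_int (wseq m d n) = of_int d ^ n * (a ^ n + a' ^ n)"
proof (induction n rule: less_induct)
  case (less n)
  show ?case
  proof (cases n)
    case 0
    then show ?thesis by simp
  next
    case (Suc n1)
    show ?thesis
    proof (cases n1)
      case 0
      then show ?thesis using Suc T d by simp
    next
      case (Suc n2)
      have a2: "a^2 = (a + a') * a + 1" using aa by (simp add: algebra_simps power2_eq_square)
      have a'2: "a'^2 = (a + a') * a' + 1" using aa by (simp add: algebra_simps power2_eq_square)
      have rec: "a ^ Suc (Suc n2) + a' ^ Suc (Suc n2) = (a + a') * (a ^ Suc n2 + a' ^ Suc n2) + (a^n2 + a'^n2)"
      proof -
        have "a ^ Suc (Suc n2) = a^2 * a^n2" by (simp add: power2_eq_square)
        moreover have "a' ^ Suc (Suc n2) = a'^2 * a'^n2" by (simp add: power2_eq_square)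
        ultimately show ?thesis unfolding a2 a'2 by (simp add: algebra_simps)
      qed
      have IH1: "of_int (wseq m d (Suc n2)) = of_int d ^ Suc n2 * (a ^ Suc n2 + a' ^ Suc n2)"
        using less \<open>n = Suc n1\<close> Suc by simp
      have IH2: "of_int (wseq m d n2) = of_int d ^ n2 * (a ^ n2 + a' ^ n2)"
        using less \<open>n = Suc n1\<close> Suc by simp
      have "of_int (wseq m d n) = of_int m * of_int (wseq m d (Suc n2)) + of_int d ^ 2 * of_int (wseq m d n2)"
        using \<open>n = Suc n1\<close> Suc by simp
      also have "\<dots> = of_int d ^ n * (a ^ n + a' ^ n)"
        unfolding IH1 IH2 \<open>n = Suc n1\<close> Suc rec T using d by (simp only: wseq_aux)
      finally show ?thesis .
    qed
  qed
qed

lemma wseq_mod: "d dvd (wseq m d (Suc n) - m ^ Suc n)"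
proof -
  have "d dvd (wseq m d (Suc n) - m ^ Suc n) \<and> d dvd (wseq m d (Suc (Suc n)) - m ^ Suc (Suc n))"
  proof (induction n)
    case 0
    have "wseq m d 2 - m^2 = d * (2 * d)" by (simp add: numeral_2_eq_2 power2_eq_square)
    then show ?case by (simp add: numeral_2_eq_2[symmetric])
  next
    case (Suc n)
    have "wseq m d (Suc (Suc (Suc n))) - m ^ Suc (Suc (Suc n)) =
      m * (wseq m d (Suc (Suc n)) - m ^ Suc (Suc n)) + d * (d * wseq m d (Suc n))"
      by (simp add: algebra_simps power2_eq_square)
    then show ?case using Suc by simp
  qed
  then show ?thesis by simp
qed

lemma trace_int:
  fixes a a' :: real and t :: rat
  assumes aa: "a * a' = -1" and T: "a + a' = of_rat t" and k: "a ^ p + a' ^ p = of_int k" and p: "p > 0"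
  shows "t \<in> \<int>"
proof -
  obtain m d where qn: "quotient_of t = (m, d)" by (cases "quotient_of t") auto
  have t: "t = of_int m / of_int d" using quotient_of_div[OF qn] .
  have d0: "d > 0" using quotient_of_denom_pos[OF qn] .
  have cop: "coprime m d" using quotient_of_coprime[OF qn] .
  have T': "a + a' = of_int m / of_int d" using T unfolding t by (simp add: of_rat_divide)
  have "(of_int (wseq m d p) :: real) = of_int d ^ p * of_int k"
    using wseq_real[OF aa T', of p] d0 k by simp
  then have "(of_int (wseq m d p) :: real) = of_int (d ^ p * k)" by simp
  then have "wseq m d p = d ^ p * k" by (simp only: of_int_eq_iff)
  then have "d dvd wseq m d p" using p by (simp add: dvd_mult2 dvd_power)
  moreover have "d dvd (wseq m d p - m ^ p)" using wseq_mod[of d m "p - 1"] p by simp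
  ultimately have "d dvd (wseq m d p - (wseq m d p - m ^ p))" by (rule dvd_diff)
  then have "d dvd m ^ p" by simp
  moreover have "coprime d (m ^ p)" using cop by (simp add: coprime_commute)
  ultimately have "is_unit d" using coprime_common_divisor[of d "m^p" d] by simp
  then have "d = 1" using d0 by auto
  then show ?thesis unfolding t by simp
qed

lemma int_sq_ge1:
  fixes x :: int
  assumes "x \<noteq> 0"
  shows "x^2 \<ge> 1"
proof -
  have "\<bar>x\<bar> \<ge> 1" using assms by linarith
  then have "\<bar>x\<bar>^2 \<ge> 1" by (rule one_le_power)
  then show ?thesis by (simp only: power2_abs)
qed

lemma T_ge_k:
  fixes k Ti Bi D m :: int
  assumes Ti: "Ti \<ge> 1" and k1: "k \<ge> 1"
    and cases: "(odd k \<and> D = k^2 + 4) \<or> (k = 2 * m \<and> odd m \<and> D = m^2 + 1)"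
    and eq: "Ti^2 + 4 = Bi^2 * D"
  shows "Ti \<ge> k"
proof -
  have "k^2 \<le> Ti^2"
  proof (cases "odd k \<and> D = k^2 + 4")
    case True
    have "Bi \<noteq> 0"
    proof
      assume "Bi = 0"
      then have "Ti^2 + 4 = 0" using eq by simp
      moreover have "Ti^2 \<ge> 0" by simp
      ultimately show False by linarith
    qed
    then have "Bi^2 \<ge> 1" by (rule int_sq_ge1)
    then have "Bi^2 * D \<ge> 1 * D" using True by (intro mult_right_mono) auto
    then show ?thesis using eq True by simp
  next
    case False
    then have km: "k = 2 * m" and m: "odd m" and D: "D = m^2 + 1" using cases by auto
    show ?thesis
    proof (cases "even Bi")
      case True
      then obtain c where c: "Bi = 2 * c" by (elim evenE)
      have "c \<noteq> 0"
      proof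
        assume "c = 0"
        then have "Ti^2 + 4 = 0" using eq c by simp
        moreover have "Ti^2 \<ge> 0" by simp
        ultimately show False by linarith
      qed
      then have "c^2 \<ge> 1" by (rule int_sq_ge1)
      then have "c^2 * (m^2 + 1) \<ge> 1 * (m^2 + 1)" by (intro mult_right_mono) auto
      then have "4 * (c^2 * (m^2 + 1)) \<ge> 4 * (m^2 + 1)" by linarith
      moreover have "Ti^2 + 4 = 4 * (c^2 * (m^2 + 1))" using eq c D by (simp add: power_mult_distrib)
      ultimately have "Ti^2 + 4 \<ge> 4 * (m^2 + 1)" by linarith
      then show ?thesis using km by (simp add: power_mult_distrib)
    next
      case False
      then obtain j where j: "Bi = 2 * j + 1" by (elim oddE)
      obtain i where i: "m = 2 * i + 1" using m by (elim oddE)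
      have "even (Ti^2)"
      proof -
        have "Ti^2 = (2*j+1)^2 * (2 * (2*i^2 + 2*i + 1)) - 4" using eq j i D
          by (simp add: power2_eq_square algebra_simps)
        then show ?thesis by simp
      qed
      then have "even Ti" by simp
      then obtain t where t: "Ti = 2 * t" by (elim evenE)
      have "4 * (t^2 + 1) = 2 * ((2*j+1)^2 * (2*i^2 + 2*i + 1))"
        using eq j i D t by (simp add: power2_eq_square algebra_simps)
      then have "2 * (t^2 + 1) = (2*j+1)^2 * (2*i^2 + 2*i + 1)" by simp
      moreover have "odd ((2*j+1)^2 * (2*i^2 + 2*i + 1))" by simp
      ultimately show ?thesis by (metis even_mult_iff even_numeral)
    qed
  qed
  then show ?thesis using Ti k1 by (meson power2_le_imp_le order_trans zero_le_one)
qed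

lemma kD_facts:
  fixes k :: int
  assumes k1: "k \<ge> 1" and k4: "\<not> 4 dvd k"
  defines "g \<equiv> gcd 2 k"
  defines "D \<equiv> (k^2 + 4) div g^2"
  shows "g^2 * D = k^2 + 4" "g > 0" "D > 1"
    "(odd k \<and> D = k^2 + 4) \<or> (\<exists>m. k = 2 * m \<and> odd m \<and> D = m^2 + 1)"
proof -
  have main: "g^2 * D = k^2 + 4 \<and> g > 0 \<and> D > 1 \<and>
    ((odd k \<and> D = k^2 + 4) \<or> (\<exists>m. k = 2 * m \<and> odd m \<and> D = m^2 + 1))"
  proof (cases "even k")
    case True
    then obtain m where m: "k = 2 * m" by (elim evenE)
    have mo: "odd m" using k4 m by auto
    have g: "g = 2" unfolding g_def m by (simp add: gcd_mult_left)
    have "k^2 + 4 = 4 * (m^2 + 1)" unfolding m by (simp add: power_mult_distrib)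
    then have D: "D = m^2 + 1" unfolding D_def g by simp
    have "m \<noteq> 0" using mo by auto
    then have "m^2 \<ge> 1" by (rule int_sq_ge1)
    then show ?thesis using m mo g D by (auto simp: power_mult_distrib)
  next
    case False
    then have "coprime 2 k" by simp
    then have g: "g = 1" unfolding g_def by simp
    have D: "D = k^2 + 4" unfolding D_def g by simp
    have "k^2 \<ge> 1" using k1 by (intro int_sq_ge1) auto
    then show ?thesis using g D False by auto
  qed
  then show "g^2 * D = k^2 + 4" "g > 0" "D > 1"
    "(odd k \<and> D = k^2 + 4) \<or> (\<exists>m. k = 2 * m \<and> odd m \<and> D = m^2 + 1)" by auto
qed

fun pw :: "rat \<Rightarrow> rat \<Rightarrow> rat \<Rightarrow> nat \<Rightarrow> rat \<times> rat" where
  "pw u v D 0 = (1, 0)"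
| "pw u v D (Suc n) = (u * fst (pw u v D n) + D * v * snd (pw u v D n),
                       u * snd (pw u v D n) + v * fst (pw u v D n))"

lemma pw_pow:
  fixes s :: real
  assumes ss: "s * s = of_rat D"
  shows "(of_rat u + of_rat v * s) ^ n = of_rat (fst (pw u v D n)) + of_rat (snd (pw u v D n)) * s \<and>
         (of_rat u - of_rat v * s) ^ n = of_rat (fst (pw u v D n)) - of_rat (snd (pw u v D n)) * s"
proof (induction n)
  case 0
  then show ?case by simp
next
  case (Suc n)
  define X where "X = fst (pw u v D n)"
  define Y where "Y = snd (pw u v D n)"
  have IH: "(of_rat u + of_rat v * s) ^ n = of_rat X + of_rat Y * s"
     "(of_rat u - of_rat v * s) ^ n = of_rat X - of_rat Y * s" using Suc unfolding X_def Y_def by auto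
  have e1: "(of_rat u + of_rat v * s) * (of_rat X + of_rat Y * s) =
     of_rat u * of_rat X + of_rat v * of_rat Y * (s * s) + (of_rat u * of_rat Y + of_rat v * of_rat X) * s"
    by (simp add: algebra_simps)
  have e2: "(of_rat u - of_rat v * s) * (of_rat X - of_rat Y * s) =
     of_rat u * of_rat X + of_rat v * of_rat Y * (s * s) - (of_rat u * of_rat Y + of_rat v * of_rat X) * s"
    by (simp add: algebra_simps)
  show ?case
    unfolding power_Suc IH e1 e2 ss
    by (simp add: X_def[symmetric] Y_def[symmetric] of_rat_add of_rat_mult algebra_simps)
qed

lemma real_pow_eq_m1:
  fixes x :: real
  assumes "x ^ p = -1" "p > 0"
  shows "x = -1"
proof -
  have "\<bar>x\<bar> ^ p = 1" using assms by (metis abs_neg_one power_abs)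
  then have "\<bar>x\<bar> ^ p = 1 ^ p" by simp
  then have "\<bar>x\<bar> = 1" using assms(2) power_eq_imp_eq_base[of "\<bar>x\<bar>" p 1] by simp
  then have "x = 1 \<or> x = -1" by auto
  then show ?thesis using assms by auto
qed

lemma final_contra:
  fixes k :: int and p :: nat and a :: real and D :: int
  assumes k1: "k \<ge> 1" and k4: "\<not> 4 dvd k" and Ddef: "D = (k^2+4) div (gcd 2 k)^2"
    and sf: "squarefree D"
    and p: "prime p" and aK: "a \<in> Kr D" and a0: "a > 0"
    and ap: "a ^ p = (of_int k + sqrt (of_int (k^2+4))) / 2"
  shows False
proof -
  define g where "g = gcd 2 k"
  have gD: "g^2 * D = k^2+4" "g > 0" "D > 1"
    and cs: "(odd k \<and> D = k^2 + 4) \<or> (\<exists>m. k = 2 * m \<and> odd m \<and> D = m^2 + 1)"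
    using kD_facts[OF k1 k4] unfolding Ddef g_def by auto
  have p0: "p > 0" and p1: "p > 1" using prime_gt_1_nat[OF p] by auto
  define s where "s = sqrt (of_int D :: real)"
  have D0: "D \<ge> 0" using gD(3) by linarith
  have ss: "s * s = of_int D" unfolding s_def using D0 by (metis real_sqrt_mult_self abs_of_nonneg of_int_0_le_iff)
  have s0: "s \<ge> 0" using D0 by (simp add: s_def)
  have gDr: "(of_int g)^2 * (of_int D :: real) = (of_int k)^2 + 4"
    using arg_cong[OF gD(1), of "of_int :: int \<Rightarrow> real"] by simp
  have r: "sqrt (of_int (k^2+4)) = of_int g * s"
  proof -
    have "sqrt (of_int (k^2+4)) = sqrt ((of_int g)^2 * (of_int D :: real))" using gDr by simp
    also have "\<dots> = of_int g * s" using gD(2) by (simp add: real_sqrt_mult s_def)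
    finally show ?thesis .
  qed
  define e where "e = (of_int k + of_int g * s) / (2::real)"
  define e' where "e' = (of_int k - of_int g * s) / (2::real)"
  have ee: "e * e' = -1"
  proof -
    have "e * e' = ((of_int k)^2 - (of_int g)^2 * (s * s)) / 4"
      unfolding e_def e'_def by (simp add: field_simps power2_eq_square)
    also have "\<dots> = -1" unfolding ss using gDr by simp
    finally show ?thesis .
  qed
  have esum: "e + e' = of_int k" unfolding e_def e'_def by (simp add: field_simps)
  have e1: "e > 1"
  proof -
    have "(4::real) < of_int (k^2+4)" using int_sq_ge1[of k] k1 by simp
    then have "sqrt 4 < sqrt (of_int (k^2+4) :: real)" by (simp only: real_sqrt_less_iff)
    then have "2 < of_int g * s" using r by simp
    then show ?thesis unfolding e_def using k1 by simp
  qed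
  have ap': "a ^ p = e" using ap r unfolding e_def by simp
  obtain u v where uv: "a = of_rat u + of_rat v * s" using aK unfolding Kr_def s_def by blast
  have Dq: "s * s = of_rat (of_int D)" using ss by simp
  note P = pw_pow[OF Dq, of u v p]
  define X where "X = fst (pw u v (of_int D) p)"
  define Y where "Y = snd (pw u v (of_int D) p)"
  have "of_rat X + of_rat Y * sqrt (of_int D) = of_rat (of_int k / 2) + of_rat (of_int g / 2) * sqrt (of_int D)"
    using P ap' uv unfolding X_def Y_def e_def s_def by (simp add: of_rat_divide add_divide_distrib)
  from Kr_unique[OF sf gD(3) this] have XY: "X = of_int k / 2" "Y = of_int g / 2" by auto
  define a' where "a' = of_rat u - of_rat v * s"
  have a'p: "a' ^ p = e'" using P XY unfolding a'_def X_def[symmetric] Y_def[symmetric] e'_def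
    by (simp add: of_rat_divide diff_divide_distrib)
  have "(a * a') ^ p = -1" using ap' a'p ee by (simp add: power_mult_distrib)
  then have aa: "a * a' = -1" using p0 by (rule real_pow_eq_m1)
  have T: "a + a' = of_rat (2 * u)" unfolding uv a'_def by (simp add: of_rat_mult)
  have tr: "a ^ p + a' ^ p = of_int k" using ap' a'p esum by simp
  have "2 * u \<in> \<int>" by (rule trace_int[OF aa T tr p0])
  then obtain Ti where Ti: "2 * u = of_int Ti" by (elim Ints_cases)
  have a1: "a > 1"
  proof (rule ccontr)
    assume "\<not> a > 1"
    then have "a ^ p \<le> 1" using a0 by (intro power_le_one) auto
    then show False using ap' e1 by simp
  qed
  have a'eq: "a' = - 1 / a" using aa a0 by (simp add: field_simps)
  have Tr: "a - 1 / a = of_int Ti" using T a'eq Ti by simp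
  have "1 / a < 1" using a1 by simp
  then have "of_int Ti > (0::real)" using Tr a1 by linarith
  then have Ti1: "Ti \<ge> 1" by simp
  have "(a - a')^2 = (a + a')^2 - 4 * (a * a')" by (simp add: power2_eq_square algebra_simps)
  also have "\<dots> = of_int (Ti^2 + 4)" using T Ti aa by simp
  finally have e2: "(a - a')^2 = of_int (Ti^2 + 4)" .
  have c2: "(a - a')^2 = of_rat ((2 * v)^2 * of_int D)"
  proof -
    have "a - a' = 2 * of_rat v * s" unfolding uv a'_def by simp
    then have "(a - a')^2 = 4 * (of_rat v)^2 * (s * s)" by (simp add: power2_eq_square algebra_simps)
    then show ?thesis unfolding ss by (simp add: of_rat_mult of_rat_power power_mult_distrib)
  qed
  have "(of_rat ((2 * v)^2 * of_int D) :: real) = of_rat (of_int (Ti^2 + 4))"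
    using c2 e2 of_rat_of_int_eq by metis
  then have Bq: "(2 * v)^2 * of_int D = of_int (Ti^2 + 4)" by (simp only: of_rat_eq_iff)
  have "2 * v \<in> \<int>" by (rule sq_int[OF sf]) (use Bq in simp)
  then obtain Bi where Bi: "2 * v = of_int Bi" by (elim Ints_cases)
  have "(of_int (Bi^2 * D) :: rat) = of_int (Ti^2 + 4)" using Bq Bi by simp
  then have eqi: "Ti^2 + 4 = Bi^2 * D" by (simp only: of_int_eq_iff)
  from cs obtain m where cs': "(odd k \<and> D = k^2 + 4) \<or> (k = 2 * m \<and> odd m \<and> D = m^2 + 1)" by blast
  have Tk: "Ti \<ge> k" by (rule T_ge_k[OF Ti1 k1 cs' eqi])
  have ea: "e \<le> a"
  proof (rule ccontr)
    assume "\<not> e \<le> a"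
    then have ae: "a < e" by simp
    then have "1 / e < 1 / a" using a0 by (simp add: frac_less2)
    then have "a - 1 / a < e - 1 / e" using ae by linarith
    moreover have "e - 1 / e = of_int k"
    proof -
      have "e' = - 1 / e" using ee e1 by (simp add: field_simps)
      then show ?thesis using esum by simp
    qed
    ultimately have "of_int Ti < (of_int k :: real)" using Tr by simp
    then show False using Tk by simp
  qed
  have "e ^ p \<le> a ^ p" using ea e1 by (intro power_mono) auto
  moreover have "e ^ 1 < e ^ p" using e1 p1 by (intro power_strict_increasing) auto
  ultimately show False using ap' by simp
qed

lemma of_real_of_rat_c: "complex_of_real (of_rat r) = of_rat r"
  by (cases r) (simp add: of_rat_rat of_real_divide)

lemma Kr_power: "D \<ge> 0 \<Longrightarrow> x \<in> Kr D \<Longrightarrow> x ^ n \<in> Kr D"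
proof (induction n)
  case 0
  then show ?case using Kr_ops(1)[of D 1] by simp
next
  case (Suc n)
  then show ?case using Kr_ops(3)[of D x "x^n"] by simp
qed

lemma capelli_Kr:
  fixes q :: "complex poly" and c b :: real
  assumes sf: "squarefree D" and D1: "D > 1" and p: "prime p" and b0: "b > 0"
    and qK: "cin (Kc D) q" and lc: "lead_coeff q = 1"
    and dv: "q dvd (monom 1 p - [:complex_of_real c:])"
    and cb: "\<bar>c\<bar> = b ^ p" and bpK: "b ^ p \<in> Kr D"
    and r0: "degree q > 0" and rp: "degree q < p"
  shows "b \<in> Kr D"
proof -
  define r where "r = degree q"
  have D0: "D \<ge> 0" using D1 by simp
  have p0: "p > 0" using prime_gt_0_nat[OF p] .
  have "cmod (poly q 0) = b ^ degree q"
    by (rule monic_dvd_root_mod[OF dv lc _ b0 p0]) (use cb in simp)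
  moreover have "poly q 0 \<in> Kc D" using qK by (simp add: cin_def poly_0_coeff_0)
  then obtain x where x: "x \<in> Kr D" "poly q 0 = complex_of_real x" unfolding Kc_def by blast
  ultimately have "\<bar>x\<bar> = b ^ r" unfolding r_def by simp
  then have "b ^ r = x \<or> b ^ r = - x" by auto
  then have brK: "b ^ r \<in> Kr D" using x(1) Kr_ops(4)[OF D0] by auto
  have "coprime p r" using p r0 rp unfolding r_def
    by (intro prime_imp_coprime) (auto dest: dvd_imp_le)
  then have "gcd r p = 1" by (simp add: coprime_commute)
  then obtain c' e' where ce: "r * c' = p * e' + 1" using bezout_nat[of r p] r0 unfolding r_def by auto
  have "(b ^ r) ^ c' = (b ^ p) ^ e' * b" by (simp add: power_mult[symmetric] ce power_add)
  then have "b = (b ^ r) ^ c' * inverse ((b ^ p) ^ e')" using b0 by (simp add: field_simps)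
  moreover have "(b ^ r) ^ c' \<in> Kr D" by (rule Kr_power[OF D0 brK])
  moreover have "inverse ((b ^ p) ^ e') \<in> Kr D"
    by (rule Kr_inverse[OF sf D1 Kr_power[OF D0 bpK]])
  ultimately show ?thesis using Kr_ops(3)[OF D0] by metis
qed

lemma map_rat_mult:
  "map_poly (of_rat :: rat \<Rightarrow> complex) (f * h) = map_poly of_rat f * map_poly of_rat h"
  by (simp add: poly_eq_iff coeff_map_poly coeff_mult of_rat_sum of_rat_mult)

lemma map_F:
  "map_poly (of_rat :: rat \<Rightarrow> complex) (F_poly k p) = monom 1 (2 * p) - smult (of_int k) (monom 1 p) - 1"
  by (simp add: poly_eq_iff coeff_map_poly F_poly_def of_rat_diff of_rat_mult coeff_monom)

lemma F_factor:
  fixes E E' :: complex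
  assumes "E * E' = -1" "E + E' = of_int k"
  shows "(monom 1 p - [:E:]) * (monom 1 p - [:E':]) = monom 1 (2 * p) - smult (of_int k) (monom 1 p) - 1"
proof -
  have mm: "monom 1 p * monom 1 p = (monom 1 (2 * p) :: complex poly)" by (simp add: mult_monom mult_2)
  have "(monom 1 p - [:E:]) * (monom 1 p - [:E':]) =
     monom 1 p * monom 1 p - smult (E + E') (monom 1 p) + [:E * E':]"
    by (simp add: algebra_simps smult_add_left)
  then show ?thesis unfolding mm using assms by (simp add: one_pCons)
qed

lemma subfld_Rats: "subfld (\<rat> :: complex set)"
  by (auto simp: subfld_def)

lemma degree_binom:
  assumes "n > 0"
  shows "degree (monom 1 n - [:c:] :: complex poly) = n" and "lead_coeff (monom 1 n - [:c:] :: complex poly) = 1"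
proof -
  have eq: "monom 1 n - [:c:] = [:-c:] + (monom 1 n :: complex poly)" by simp
  have "degree [:-c:] < degree (monom 1 n :: complex poly)" using assms by (simp add: degree_monom_eq)
  then have d: "degree (monom 1 n - [:c:] :: complex poly) = n" unfolding eq
    by (subst degree_add_eq_right) (auto simp: degree_monom_eq)
  then show "degree (monom 1 n - [:c:] :: complex poly) = n" .
  show "lead_coeff (monom 1 n - [:c:] :: complex poly) = 1" unfolding d using assms by (cases n) auto
qed

lemma deg_eq_dvd:
  fixes x y :: "complex poly"
  assumes "x dvd y" "y \<noteq> 0" "degree x = degree y"
  shows "y dvd x"
proof -
  obtain w where w: "y = x * w" using assms(1) by (elim dvdE)
  have x0: "x \<noteq> 0" and w0: "w \<noteq> 0" using w assms(2) by auto
  have "degree y = degree x + degree w" unfolding w using x0 w0 by (simp add: degree_mult_eq)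
  then have "degree w = 0" using assms(3) by simp
  then have "is_unit w" using w0 by (simp add: is_unit_iff_degree)
  then show ?thesis unfolding w by (simp add: mult_unit_dvd_iff)
qed

lemma assoc_rat:
  fixes G :: "complex poly"
  assumes GQ: "cin \<rat> G" and n: "n > 0"
    and d1: "(monom 1 n - [:c:]) dvd G" and d2: "G dvd (monom 1 n - [:c:])"
  shows "c \<in> \<rat>"
proof -
  let ?f = "monom 1 n - [:c:] :: complex poly"
  have "normalize G = normalize ?f" using d2 d1 by (rule associatedI)
  also have "normalize ?f = ?f"
  proof -
    have "lead_coeff ?f = 1" by (rule degree_binom(2)[OF n])
    then have "[:unit_factor (lead_coeff ?f):] = 1" by (simp add: one_pCons)
    then show ?thesis unfolding normalize_poly_def by simp
  qed
  finally have nf: "normalize G = ?f" .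
  have "cin \<rat> [:unit_factor (lead_coeff G):]"
    using GQ by (intro cin_const[OF subfld_Rats]) (auto simp: cin_def)
  then have "cin \<rat> (normalize G)" unfolding normalize_poly_def
    using cin_divmod[OF subfld_Rats _ GQ] by blast
  then have "coeff ?f 0 \<in> \<rat>" unfolding nf cin_def by blast
  then have "- c \<in> \<rat>" using n by simp
  then show ?thesis by (metis Rats_minus_iff)
qed

theorem lemma3p1:
  fixes k :: int and p :: nat
  assumes "k \<ge> 1"
    and "\<not> (4 dvd k)"
    and "squarefree ((k^2 + 4) div (gcd 2 k)^2)"
    and "prime p"
  shows "irreducible (F_poly k p)"
proof (rule ccontr)
  assume nirr: "\<not> irreducible (F_poly k p)"
  note k1 = assms(1) and k4 = assms(2) and p = assms(4)
  define D where "D = (k^2 + 4) div (gcd 2 k)^2"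
  define g where "g = gcd 2 k"
  have sf: "squarefree D" using assms(3) unfolding D_def .
  have gD: "g^2 * D = k^2+4" "g > 0" "D > 1"
    using kD_facts[OF k1 k4] unfolding D_def g_def by auto
  have p0: "p > 0" using prime_gt_0_nat[OF p] .
  have D0: "D \<ge> 0" using gD(3) by linarith
  define s where "s = sqrt (of_int D :: real)"
  have ss: "s * s = of_int D" unfolding s_def using D0 by (metis real_sqrt_mult_self abs_of_nonneg of_int_0_le_iff)
  have s0: "s > 0" using gD(3) by (simp add: s_def)
  have gDr: "(of_int g)^2 * (of_int D :: real) = (of_int k)^2 + 4"
    using arg_cong[OF gD(1), of "of_int :: int \<Rightarrow> real"] by simp
  have r: "sqrt (of_int (k^2+4)) = of_int g * s"
  proof -
    have "sqrt (of_int (k^2+4)) = sqrt ((of_int g)^2 * (of_int D :: real))" using gDr by simp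
    also have "\<dots> = of_int g * s" using gD(2) by (simp add: real_sqrt_mult s_def)
    finally show ?thesis .
  qed
  define e where "e = (of_int k + of_int g * s) / (2::real)"
  define e' where "e' = (of_int k - of_int g * s) / (2::real)"
  have ee: "e * e' = -1"
  proof -
    have "e * e' = ((of_int k)^2 - (of_int g)^2 * (s * s)) / 4"
      unfolding e_def e'_def by (simp add: field_simps power2_eq_square)
    also have "\<dots> = -1" unfolding ss using gDr by simp
    finally show ?thesis .
  qed
  have esum: "e + e' = of_int k" unfolding e_def e'_def by (simp add: field_simps)
  have e1: "e > 1"
  proof -
    have "(4::real) < of_int (k^2+4)" using int_sq_ge1[of k] k1 by simp
    then have "sqrt 4 < sqrt (of_int (k^2+4) :: real)" by (simp only: real_sqrt_less_iff)
    then have "2 < of_int g * s" using r by simp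
    then show ?thesis unfolding e_def using k1 by simp
  qed
  have e'eq: "e' = - 1 / e" using ee e1 by (simp add: field_simps)
  have e'neg: "e' < 0" unfolding e'eq using e1 by simp
  define a where "a = root p e"
  have a0: "a > 0" unfolding a_def using e1 p0 by simp
  have ap: "a ^ p = e" unfolding a_def using e1 p0 by (simp add: real_root_pow_pos)
  have eK: "e \<in> Kr D"
  proof -
    have "e = of_rat (of_int k / 2) + of_rat (of_int g / 2) * sqrt (of_int D)"
      unfolding e_def s_def by (simp add: of_rat_divide add_divide_distrib)
    then show ?thesis unfolding Kr_def by blast
  qed
  have e'K: "e' \<in> Kr D"
  proof -
    have "e' = of_rat (of_int k / 2) + of_rat (- of_int g / 2) * sqrt (of_int D)"
      unfolding e'_def s_def by (simp add: of_rat_divide of_rat_minus diff_divide_distrib)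
    then show ?thesis unfolding Kr_def by blast
  qed
  have aK: "a \<in> Kr D"
  proof -
    let ?F = "F_poly k p"
    define f1 where "f1 = (monom 1 p - [:complex_of_real e:])"
    define f2 where "f2 = (monom 1 p - [:complex_of_real e':])"
    have fac: "map_poly of_rat ?F = f1 * f2"
      unfolding map_F f1_def f2_def
    proof (rule F_factor[symmetric])
      show "complex_of_real e * complex_of_real e' = -1" by (metis ee of_real_mult of_real_minus of_real_1)
      show "complex_of_real e + complex_of_real e' = of_int k" by (metis esum of_real_add of_real_of_int_eq)
    qed
    have df1: "degree f1 = p" "lead_coeff f1 = 1" unfolding f1_def using degree_binom[OF p0] by auto
    have df2: "degree f2 = p" "lead_coeff f2 = 1" unfolding f2_def using degree_binom[OF p0] by auto
    have f10: "f1 \<noteq> 0" and f20: "f2 \<noteq> 0" using df1 df2 by auto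
    have dF: "degree ?F = 2 * p"
    proof -
      have "degree (map_poly (of_rat :: rat \<Rightarrow> complex) ?F) = degree ?F"
        by (rule degree_map_poly) simp
      then show ?thesis using fac f10 f20 df1 df2 by (simp add: degree_mult_eq)
    qed
    then have F0: "?F \<noteq> 0" using p0 by auto
    have Fnu: "\<not> is_unit ?F" using F0 dF p0 by (simp add: is_unit_iff_degree)
    from nirr F0 Fnu obtain f h where fh: "?F = f * h" "\<not> is_unit f" "\<not> is_unit h"
      unfolding irreducible_def by blast
    have f0: "f \<noteq> 0" and h0: "h \<noteq> 0" using fh F0 by auto
    have dfp: "degree f > 0" "degree h > 0" using fh f0 h0 by (auto simp: is_unit_iff_degree)
    have "degree ?F = degree f + degree h" using fh f0 h0 by (simp add: degree_mult_eq)
    then have df2p: "degree f < 2 * p" using dF dfp by simp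
    define G where "G = map_poly (of_rat :: rat \<Rightarrow> complex) f"
    have dG: "degree G = degree f" unfolding G_def by (rule degree_map_poly) simp
    have G0: "G \<noteq> 0" using dG dfp by auto
    have Gdv: "G dvd f1 * f2"
    proof -
      have "f1 * f2 = G * map_poly of_rat h" unfolding fac[symmetric] G_def fh(1) by (rule map_rat_mult)
      then show ?thesis by simp
    qed
    have KD: "subfld (Kc D)" by (rule subfld_Kc[OF sf gD(3)])
    have ratK: "of_rat x \<in> Kc D" for x
    proof -
      have "of_rat x \<in> Kr D" using Kr_ops(1)[OF D0] .
      then show ?thesis unfolding Kc_def by (metis of_real_of_rat_c image_eqI)
    qed
    have GK: "cin (Kc D) G" unfolding G_def cin_def by (simp add: coeff_map_poly ratK)
    have GQ: "cin \<rat> G" unfolding G_def cin_def by (simp add: coeff_map_poly)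
    have oneK: "1 \<in> Kc D" using ratK[of 1] by simp
    have f1K: "cin (Kc D) f1" unfolding f1_def
      using eK by (intro cin_diff[OF KD] cin_monom[OF KD oneK] cin_const[OF KD]) (auto simp: Kc_def)
    have f2K: "cin (Kc D) f2" unfolding f2_def
      using e'K by (intro cin_diff[OF KD] cin_monom[OF KD oneK] cin_const[OF KD]) (auto simp: Kc_def)
    define q1 where "q1 = gcd G f1"
    define q2 where "q2 = gcd G f2"
    have q1K: "cin (Kc D) q1" unfolding q1_def by (rule cin_gcd[OF KD GK f1K])
    have q2K: "cin (Kc D) q2" unfolding q2_def by (rule cin_gcd[OF KD GK f2K])
    have q10: "q1 \<noteq> 0" and q20: "q2 \<noteq> 0" using G0 unfolding q1_def q2_def by auto
    have lcq: "lead_coeff q1 = 1" "lead_coeff q2 = 1"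
    proof -
      have "unit_factor q1 = 1" "unit_factor q2 = 1" using G0 unfolding q1_def q2_def by (simp_all add: unit_factor_gcd)
      then show "lead_coeff q1 = 1" "lead_coeff q2 = 1"
        unfolding unit_factor_poly_def by (simp_all add: one_pCons)
    qed
    have q1f: "q1 dvd f1" "q1 dvd G" and q2f: "q2 dvd f2" "q2 dvd G" unfolding q1_def q2_def by auto
    have dq1: "degree q1 \<le> p" using dvd_imp_degree_le[OF q1f(1) f10] df1 by simp
    have dq2: "degree q2 \<le> p" using dvd_imp_degree_le[OF q2f(1) f20] df2 by simp
    show ?thesis
    proof (cases "0 < degree q1 \<and> degree q1 < p")
      case True
      show ?thesis
      proof (rule capelli_Kr[OF sf gD(3) p a0 q1K lcq(1)])
        show "q1 dvd monom 1 p - [:complex_of_real e:]" using q1f unfolding f1_def by simp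
        show "\<bar>e\<bar> = a ^ p" using ap e1 by simp
        show "a ^ p \<in> Kr D" using ap eK by simp
      qed (use True in auto)
    next
      case nc1: False
      show ?thesis
      proof (cases "0 < degree q2 \<and> degree q2 < p")
        case True
        have "1 / a \<in> Kr D"
        proof (rule capelli_Kr[OF sf gD(3) p _ q2K lcq(2)])
          show "q2 dvd monom 1 p - [:complex_of_real e':]" using q2f unfolding f2_def by simp
          show "\<bar>e'\<bar> = (1 / a) ^ p" using ap e'neg e'eq by (simp add: power_one_over)
          have "(1 / a) ^ p = - e'" using ap e'eq by (simp add: power_one_over)
          then show "(1 / a) ^ p \<in> Kr D" using Kr_ops(4)[OF D0 e'K] by simp
        qed (use True a0 in auto)
        then have "inverse (1 / a) \<in> Kr D" by (rule Kr_inverse[OF sf gD(3)])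
        then show ?thesis by simp
      next
        case nc2: False
        have A1: "G dvd f2 \<or> f1 dvd G"
        proof (cases "degree q1 = 0")
          case True
          then have "is_unit q1" using q10 by (simp add: is_unit_iff_degree)
          then have "coprime G f1" using is_unit_gcd unfolding q1_def by blast
          then have "G dvd f2" using Gdv by (simp add: coprime_dvd_mult_right_iff)
          then show ?thesis ..
        next
          case False
          then have "degree q1 = degree f1" using nc1 dq1 df1 by simp
          then have "f1 dvd q1" using deg_eq_dvd[OF q1f(1) f10] by simp
          then have "f1 dvd G" using q1f(2) by (rule dvd_trans)
          then show ?thesis ..
        qed
        have A2: "G dvd f1 \<or> f2 dvd G"
        proof (cases "degree q2 = 0")
          case True
          then have "is_unit q2" using q20 by (simp add: is_unit_iff_degree)
          then have "coprime G f2" using is_unit_gcd unfolding q2_def by blast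
          then have "G dvd f1" using Gdv by (simp add: coprime_dvd_mult_left_iff)
          then show ?thesis ..
        next
          case False
          then have "degree q2 = degree f2" using nc2 dq2 df2 by simp
          then have "f2 dvd q2" using deg_eq_dvd[OF q2f(1) f20] by simp
          then have "f2 dvd G" using q2f(2) by (rule dvd_trans)
          then show ?thesis ..
        qed
        have diff: "f1 - f2 = [:complex_of_real e' - complex_of_real e:]"
          unfolding f1_def f2_def by simp
        have ne: "complex_of_real e' - complex_of_real e \<noteq> 0" using e1 e'neg by simp
        have srat: "s \<notin> \<rat>"
        proof
          assume "s \<in> \<rat>"
          then obtain q where "s = of_rat q" by (elim Rats_cases)
          then show False using sqrt_irrat[OF sf gD(3)] unfolding s_def by blast
        qed
        have False
        proof -
          { assume a1: "G dvd f2" and a2: "G dvd f1"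
            have "G dvd f1 - f2" using a2 a1 by (rule dvd_diff)
            then have "G dvd [:complex_of_real e' - complex_of_real e:]" unfolding diff .
            then have "degree G \<le> degree [:complex_of_real e' - complex_of_real e:]"
              by (rule dvd_imp_degree_le) (use ne in simp)
            then have "degree G \<le> 0" by simp
            then have False using dG dfp by simp }
          moreover
          { assume a1: "f1 dvd G" and a2: "f2 dvd G"
            have "coprime f1 f2"
            proof (rule coprimeI)
              fix c assume "c dvd f1" "c dvd f2"
              then have "c dvd f1 - f2" by (rule dvd_diff)
              moreover have "is_unit (f1 - f2)" unfolding diff using ne by (simp add: is_unit_const_poly_iff dvd_field_iff)
              ultimately show "is_unit c" by (rule dvd_unit_imp_unit)
            qed
            then have "f1 * f2 dvd G" using a1 a2 by (simp add: divides_mult)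
            then have "degree (f1 * f2) \<le> degree G" using G0 by (rule dvd_imp_degree_le)
            then have False using f10 f20 df1 df2 dG df2p by (simp add: degree_mult_eq) }
          moreover
          { assume a1: "f1 dvd G" and a2: "G dvd f1"
            have "complex_of_real e \<in> \<rat>" by (rule assoc_rat[OF GQ p0]) (use a1 a2 in \<open>simp_all add: f1_def\<close>)
            then have "e \<in> \<rat>" by simp
            then have "(2 * e - of_int k) / of_int g \<in> \<rat>" by simp
            moreover have "(2 * e - of_int k) / of_int g = s" unfolding e_def using gD(2) by simp
            ultimately have False using srat by simp }
          moreover
          { assume a1: "f2 dvd G" and a2: "G dvd f2"
            have "complex_of_real e' \<in> \<rat>" by (rule assoc_rat[OF GQ p0]) (use a1 a2 in \<open>simp_all add: f2_def\<close>)
            then have "e' \<in> \<rat>" by simp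
            then have "(of_int k - 2 * e') / of_int g \<in> \<rat>" by simp
            moreover have "(of_int k - 2 * e') / of_int g = s" unfolding e'_def using gD(2) by simp
            ultimately have False using srat by simp }
          ultimately show False using A1 A2 by blast
        qed
        then show ?thesis ..
      qed
    qed
  qed
  have ap2: "a ^ p = (of_int k + sqrt (of_int (k^2+4))) / 2" using ap r unfolding e_def by simp
  show False by (rule final_contra[OF k1 k4 D_def sf p aK a0 ap2])
qed

end
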